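(* Let $n\geq 8$ and let $G$ be an $n$-vertex planar graph containing no subgraph isomorphic to $S_{2,2}$. If $G$ has a vertex of degree at least $5$, then $e(G)\leq 2n-4$.
   Context: All graphs are finite and simple; $e(G)$ denotes the number of edges of $G$. The double star $S_{2,2}$ is the tree obtained from an edge $xy$ by joining $x$ to two new vertices and $y$ to two further new vertices (6 vertices in total). *)

theory Defs
  imports "HOL-Analysis.Analysis"
begin

definition simple_graph :: "'a set \<Rightarrow> 'a set set \<Rightarrow> bool" where
  "simple_graph V E \<longleftrightarrow> finite V \<and> (\<forall>e\<in>E. e \<subseteq> V \<and> card e = 2)"

definition degree :: "'a set set \<Rightarrow> 'a \<Rightarrow> nat" where
  "degree E v = card {e\<in>E. v \<in> e}"

definition planar :: "'a set \<Rightarrow> 'a set set \<Rightarrow> bool" where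
  "planar V E \<longleftrightarrow> (\<exists>(f :: 'a \<Rightarrow> complex) (g :: 'a set \<Rightarrow> real \<Rightarrow> complex).
      inj_on f V \<and>
      (\<forall>e\<in>E. arc (g e) \<and> {pathstart (g e), pathfinish (g e)} = f ` e
               \<and> path_image (g e) \<inter> f ` V = f ` e) \<and>
      (\<forall>e\<in>E. \<forall>e'\<in>E. e \<noteq> e' \<longrightarrow> path_image (g e) \<inter> path_image (g e') = f ` (e \<inter> e')))"

text \<open>G contains a (not necessarily induced) subgraph isomorphic to the double star S_{2,2}:
  centre edge xy, x adjacent to a,b and y adjacent to c,d, all six vertices distinct.\<close>
definition contains_S22 :: "'a set \<Rightarrow> 'a set set \<Rightarrow> bool" where
  "contains_S22 V E \<longleftrightarrow> (\<exists>x y a b c d.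
      {x, y, a, b, c, d} \<subseteq> V \<and> card {x, y, a, b, c, d} = 6 \<and>
      {x, y} \<in> E \<and> {x, a} \<in> E \<and> {x, b} \<in> E \<and> {y, c} \<in> E \<and> {y, d} \<in> E)"

end

theory Submission
  imports Defs
begin

lemma nb_card:
  assumes "simple_graph V E"
  shows "card {u. {x,u} \<in> E} = degree E x"
proof -
  have "bij_betw (\<lambda>u. {x,u}) {u. {x,u} \<in> E} {e\<in>E. x \<in> e}"
  proof (rule bij_betw_imageI)
    show "inj_on (\<lambda>u. {x,u}) {u. {x,u} \<in> E}"
      by (auto simp: inj_on_def doubleton_eq_iff)
    show "(\<lambda>u. {x,u}) ` {u. {x,u} \<in> E} = {e\<in>E. x \<in> e}"
    proof
      show "(\<lambda>u. {x,u}) ` {u. {x,u} \<in> E} \<subseteq> {e\<in>E. x \<in> e}" by auto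
      show "{e\<in>E. x \<in> e} \<subseteq> (\<lambda>u. {x,u}) ` {u. {x,u} \<in> E}"
      proof
        fix e assume e: "e \<in> {e\<in>E. x \<in> e}"
        then have "card e = 2" using assms by (auto simp: simple_graph_def)
        then obtain a b where ab: "e = {a,b}" "a \<noteq> b" by (auto simp: card_2_iff)
        have "x = a \<or> x = b" using ab e by auto
        then have "\<exists>u. e = {x,u}"
        proof
          assume "x = a" then show ?thesis using ab by blast
        next
          assume "x = b" then have "e = {x,a}" using ab by (simp add: insert_commute)
          then show ?thesis by blast
        qed
        then obtain u where "e = {x,u}" by blast
        then show "e \<in> (\<lambda>u. {x,u}) ` {u. {x,u} \<in> E}" using e by auto
      qed
    qed
  qed
  then show ?thesis unfolding degree_def by (rule bij_betw_same_card)
qed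

lemma two_elems:
  assumes "card A \<ge> 2"
  obtains a b where "a \<in> A" "b \<in> A" "a \<noteq> b"
proof -
  have "\<exists>a b. a \<in> A \<and> b \<in> A \<and> a \<noteq> b"
  proof (rule ccontr)
    assume "\<not> ?thesis"
    then have "\<forall>a\<in>A. \<forall>b\<in>A. a = b" by blast
    moreover have "finite A" using assms card.infinite by force
    ultimately have "card A \<le> Suc 0" using card_le_Suc0_iff_eq by blast
    then show False using assms by simp
  qed
  then show ?thesis using that by blast
qed

lemma S22:
  assumes G: "simple_graph V E" and xy: "{x,y} \<in> E"
    and dx: "degree E x \<ge> 5" and dy: "degree E y \<ge> 3"
  shows "contains_S22 V E"
proof -
  have fin: "finite V" using G by (simp add: simple_graph_def)
  have sub: "\<And>e. e \<in> E \<Longrightarrow> e \<subseteq> V" and c2: "\<And>e. e \<in> E \<Longrightarrow> card e = 2"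
    using G by (auto simp: simple_graph_def)
  have nbV: "\<And>z. {z. {x,z} \<in> E} \<subseteq> V" "\<And>z. {z. {y,z} \<in> E} \<subseteq> V" using sub by auto
  have noloop: "\<And>z w. {z,w} \<in> E \<Longrightarrow> z \<noteq> w"
    using c2 by fastforce
  have xy_ne: "x \<noteq> y" using noloop xy by blast
  have cy: "card {u. {y,u} \<in> E} \<ge> 3" using nb_card[OF G] dy by simp
  have fy: "finite {u. {y,u} \<in> E}" using nbV(2) fin finite_subset by blast
  have "card {u. {y,u} \<in> E} - card {x} \<le> card ({u. {y,u} \<in> E} - {x})"
    by (rule diff_card_le_card_Diff) simp
  then have "card ({u. {y,u} \<in> E} - {x}) \<ge> 2" using cy by simp
  then obtain c d where cd: "c \<in> {u. {y,u} \<in> E} - {x}" "d \<in> {u. {y,u} \<in> E} - {x}" "c \<noteq> d"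
    by (rule two_elems)
  have cx: "card {u. {x,u} \<in> E} \<ge> 5" using nb_card[OF G] dx by simp
  have fx: "finite {u. {x,u} \<in> E}" using nbV(1) fin finite_subset by blast
  have "card {u. {x,u} \<in> E} - card {y,c,d} \<le> card ({u. {x,u} \<in> E} - {y,c,d})"
    by (rule diff_card_le_card_Diff) simp
  moreover have "card {y,c,d} \<le> 3" by (simp add: card_insert_le_m1)
  ultimately have "card ({u. {x,u} \<in> E} - {y,c,d}) \<ge> 2" using cx by linarith
  then obtain a b where ab: "a \<in> {u. {x,u} \<in> E} - {y,c,d}" "b \<in> {u. {x,u} \<in> E} - {y,c,d}" "a \<noteq> b"
    by (rule two_elems)
  have ax: "a \<noteq> x" "b \<noteq> x" using ab noloop by auto
  have cyy: "c \<noteq> y" "d \<noteq> y" using cd noloop by auto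
  have "{x, y, a, b, c, d} \<subseteq> V" using xy ab cd sub by auto
  moreover have "card {x, y, a, b, c, d} = 6"
  proof -
    have d: "x \<noteq> y" "x \<noteq> a" "x \<noteq> b" "x \<noteq> c" "x \<noteq> d" "y \<noteq> a" "y \<noteq> b"
      "y \<noteq> c" "y \<noteq> d" "a \<noteq> b" "a \<noteq> c" "a \<noteq> d" "b \<noteq> c" "b \<noteq> d" "c \<noteq> d"
      using ax cyy ab cd xy_ne by auto
    then show ?thesis by (simp add: card_insert_if)
  qed
  moreover have "{x, a} \<in> E" "{x, b} \<in> E" "{y, c} \<in> E" "{y, d} \<in> E" using ab cd by auto
  ultimately have H: "{x, y, a, b, c, d} \<subseteq> V \<and> card {x, y, a, b, c, d} = 6 \<and>
      {x, y} \<in> E \<and> {x, a} \<in> E \<and> {x, b} \<in> E \<and> {y, c} \<in> E \<and> {y, d} \<in> E"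
    using xy by simp
  show ?thesis unfolding contains_S22_def
    by (rule exI[of _ x], rule exI[of _ y], rule exI[of _ a], rule exI[of _ b], rule exI[of _ c], rule exI[of _ d], rule H)
qed

lemma weight:
  assumes G: "simple_graph V E" and w: "\<And>e. e \<in> E \<Longrightarrow> 2 \<le> (\<Sum>x\<in>e. f x e)"
  shows "2 * card E \<le> (\<Sum>x\<in>V. \<Sum>e\<in>{e\<in>E. x \<in> e}. (f x e :: nat))"
proof -
  have fV: "finite V" and sub: "\<And>e. e \<in> E \<Longrightarrow> e \<subseteq> V" using G by (auto simp: simple_graph_def)
  have "E \<subseteq> Pow V" using sub by auto
  then have fE: "finite E" using fV finite_subset by blast
  have "(\<Sum>x\<in>V. \<Sum>e\<in>{e\<in>E. x \<in> e}. f x e) = (\<Sum>x\<in>V. \<Sum>e\<in>E. if x \<in> e then f x e else 0)"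
    using fE by (simp add: sum.inter_filter)
  also have "\<dots> = (\<Sum>e\<in>E. \<Sum>x\<in>V. if x \<in> e then f x e else 0)"
    by (rule sum.swap)
  also have "\<dots> = (\<Sum>e\<in>E. \<Sum>x\<in>e. f x e)"
  proof (rule sum.cong[OF refl])
    fix e assume "e \<in> E"
    then have "{x\<in>V. x \<in> e} = e" using sub by auto
    moreover have "(\<Sum>x\<in>V. if x \<in> e then f x e else 0) = (\<Sum>x\<in>{x\<in>V. x \<in> e}. f x e)"
      using fV by (simp add: sum.inter_filter)
    ultimately show "(\<Sum>x\<in>V. if x \<in> e then f x e else 0) = (\<Sum>x\<in>e. f x e)" by simp
  qed
  also have "\<dots> \<ge> (\<Sum>e\<in>E. 2)" by (rule sum_mono) (rule w)
  finally show ?thesis by simp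
qed

theorem lemma2p2:
  fixes V :: "'a set" and E :: "'a set set"
  assumes "simple_graph V E"
    and "card V \<ge> 8"
    and "planar V E"
    and "\<not> contains_S22 V E"
    and "\<exists>v\<in>V. degree E v \<ge> 5"
  shows "card E \<le> 2 * card V - 4"
proof -
  note G = assms(1)
  have fV: "finite V" and sub: "\<And>e. e \<in> E \<Longrightarrow> e \<subseteq> V"
    and c2: "\<And>e. e \<in> E \<Longrightarrow> card e = 2" using G by (auto simp: simple_graph_def)
  obtain v where vV: "v \<in> V" and dv: "degree E v \<ge> 5" using assms(5) by blast
  have hi: "degree E y \<le> 2" if "{x,y} \<in> E" "degree E x \<ge> 5" for x y
    using S22[OF G that(1) that(2)] assms(4) by fastforce
  have nolo: "\<And>e. e \<in> E \<Longrightarrow> \<exists>a b. e = {a,b} \<and> a \<noteq> b" using c2 by (auto simp: card_2_iff)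
  define N where "N = {u. {v,u} \<in> E}"
  have NV: "N \<subseteq> V" using sub by (auto simp: N_def)
  have vN: "v \<notin> N" using c2[of "{v}"] by (auto simp: N_def)
  have cN: "card N = degree E v" unfolding N_def by (rule nb_card[OF G])
  have dN: "\<And>u. u \<in> N \<Longrightarrow> degree E u \<le> 2" using hi dv by (auto simp: N_def)
  have fN: "finite N" using NV fV finite_subset by blast
  show ?thesis
  proof (cases "\<exists>w\<in>V. w \<noteq> v \<and> degree E w \<ge> 5")
    case True
    then obtain w where wV: "w \<in> V" and wv: "w \<noteq> v" and dw: "degree E w \<ge> 5" by blast
    define f :: "'a \<Rightarrow> 'a set \<Rightarrow> nat" where
      "f x e = (if degree E x \<le> 2 then 2 else if degree E x \<le> 4 then 1 else 0)" for x e
    have "2 * card E \<le> (\<Sum>x\<in>V. \<Sum>e\<in>{e\<in>E. x \<in> e}. f x e)"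
    proof (rule weight[OF G])
      fix e assume eE: "e \<in> E"
      then obtain a b where ab: "e = {a,b}" "a \<noteq> b" using nolo by blast
      have "2 \<le> f a e + f b e"
      proof -
        have "degree E a \<ge> 5 \<Longrightarrow> degree E b \<le> 2" using hi eE ab by auto
        moreover have "degree E b \<ge> 5 \<Longrightarrow> degree E a \<le> 2" using hi eE ab by (auto simp: insert_commute)
        ultimately show ?thesis unfolding f_def by auto
      qed
      then show "2 \<le> (\<Sum>x\<in>e. f x e)" using ab by simp
    qed
    also have "\<dots> \<le> (\<Sum>x\<in>V. if degree E x \<le> 4 then 4 else 0)"
    proof (rule sum_mono)
      fix x assume "x \<in> V"
      have "(\<Sum>e\<in>{e\<in>E. x \<in> e}. f x e) = degree E x * (if degree E x \<le> 2 then 2 else if degree E x \<le> 4 then 1 else 0)"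
        by (simp add: f_def degree_def)
      then show "(\<Sum>e\<in>{e\<in>E. x \<in> e}. f x e) \<le> (if degree E x \<le> 4 then 4 else 0)"
        by auto
    qed
    also have "\<dots> = (\<Sum>x\<in>V - {v,w}. if degree E x \<le> 4 then 4 else 0)"
    proof -
      have "(\<Sum>x\<in>V. if degree E x \<le> 4 then 4 else (0::nat)) =
            (\<Sum>x\<in>V - {v,w}. if degree E x \<le> 4 then 4 else 0) + (\<Sum>x\<in>{v,w}. if degree E x \<le> 4 then 4 else 0)"
        using fV vV wV by (intro sum.subset_diff) auto
      also have "(\<Sum>x\<in>{v,w}. if degree E x \<le> 4 then 4 else (0::nat)) = 0" using dv dw wv by simp
      finally show ?thesis by simp
    qed
    also have "\<dots> \<le> (\<Sum>x\<in>V - {v,w}. 4)" by (rule sum_mono) simp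
    also have "\<dots> = 4 * (card V - 2)" using fV vV wV wv by (simp add: card_Diff_subset)
    finally show ?thesis by linarith
  next
    case False
    then have d4: "\<And>x. x \<in> V \<Longrightarrow> x \<noteq> v \<Longrightarrow> degree E x \<le> 4" by force
    have "2 * card E \<le> (\<Sum>x\<in>V. \<Sum>e\<in>{e\<in>E. x \<in> e}. (1::nat))"
      by (rule weight[OF G]) (use nolo in force)
    also have "\<dots> = (\<Sum>x\<in>V. degree E x)" by (simp add: degree_def)
    also have "\<dots> = degree E v + (\<Sum>x\<in>N. degree E x) + (\<Sum>x\<in>V - {v} - N. degree E x)"
    proof -
      have V: "V = insert v (N \<union> (V - {v} - N))" using vV NV by auto
      have "(\<Sum>x\<in>V. degree E x) = (\<Sum>x\<in>insert v (N \<union> (V - {v} - N)). degree E x)"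
        using V by simp
      also have "\<dots> = degree E v + (\<Sum>x\<in>N \<union> (V - {v} - N). degree E x)"
        using vN fN fV by (subst sum.insert) auto
      also have "(\<Sum>x\<in>N \<union> (V - {v} - N). degree E x) = (\<Sum>x\<in>N. degree E x) + (\<Sum>x\<in>V - {v} - N. degree E x)"
        using fN fV by (subst sum.union_disjoint) auto
      finally show ?thesis by simp
    qed
    also have "\<dots> \<le> degree E v + (\<Sum>x\<in>N. 2) + (\<Sum>x\<in>V - {v} - N. 4)"
      using dN d4 by (intro add_mono sum_mono order.refl) auto
    also have "\<dots> = degree E v + 2 * degree E v + 4 * (card V - 1 - degree E v)"
    proof -
      have "card (V - {v} - N) = card V - 1 - card N"
      proof -
        have "V - {v} - N = V - insert v N" by auto
        moreover have "card (V - insert v N) = card V - card (insert v N)"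
          using fV vV NV fN by (intro card_Diff_subset) auto
        moreover have "card (insert v N) = card N + 1" using fN vN by simp
        ultimately show ?thesis by simp
      qed
      then show ?thesis using cN by simp
    qed
    finally have A: "2 * card E \<le> 3 * degree E v + 4 * (card V - 1 - degree E v)" by simp
    have "card N \<le> card (V - {v})" using NV vN fV by (intro card_mono) auto
    moreover have "card V \<ge> 1" using card_mono[of V "{v}"] vV fV by simp
    ultimately have "degree E v + 1 \<le> card V" using cN vV fV by (simp add: card_Diff_singleton)
    then show ?thesis using A dv by linarith
  qed
qed

end
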